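(* Let $p\in[0,1]$ be unknown, and let $\theta\in[0,1)$, $\eta\in(0,1)$ with $\theta+\eta<1$, and $\delta\in(0,1]$. Suppose \textsc{Tester} is a procedure satisfying the tester guarantee described in the context. Then the algorithm \textsc{BinCert}$(\theta,\eta,\delta)$ (defined in the context) terminates, and $$\Pr[\textsc{BinCert}(\theta,\eta,\delta)\text{ returns Yes}]\ge 1-\delta \quad\text{whenever } p\le\theta,$$ $$\Pr[\textsc{BinCert}(\theta,\eta,\delta)\text{ returns No}]\ge 1-\delta \quad\text{whenever } p>\theta+\eta.$$
   Context: Setting: there is an unknown number $p\in[0,1]$ (the probability that a 0-1 property holds on a random input). A procedure $\textsc{Tester}(a,b,\delta')$, for $0\le a<b\le 1$ and $\delta'\in(0,1]$, is a randomized procedure returning one of Yes, No, None, using fresh randomness independent of all other calls, and satisfying the tester guarantee: if $p\le a$ then $\Pr[\textsc{Tester}(a,b,\delta')\text{ returns Yes}]\ge 1-\delta'$, and if $p> b$ then $\Pr[\textsc{Tester}(a,b,\delta')\text{ returns No}]\ge 1-\delta'$. Algorithm $\textsc{BinCert}(\theta,\eta,\delta)$: Let $\log$ denote $\log_2$ and set $n=3+\max(0,\log(\theta/\eta))+\max(0,\log((1-\theta-\eta)/\eta))$ (where $\max(0,\log(\theta/\eta))$ is taken to be $0$ if $\theta=0$), and $\delta_{\min}=\delta/n$. The algorithm maintains a "left" interval $(a_L,b_L)$ and a "right" interval $(a_R,b_R)$, both initially undefined. The left update is: if $\theta=0$, set $(a_L,b_L)=(0,\eta)$; otherwise, if the left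 interval is undefined, set it to $(0,\theta)$; otherwise with $\alpha=b_L-a_L$ set it to $(b_L-\max(\eta,\alpha/2),\,b_L)$. The right update is: if the right interval is undefined, set it to $(\theta+\eta,1)$; otherwise with $\alpha=b_R-a_R$ set it to $(a_R,\,a_R+\max(\eta,\alpha/2))$. The algorithm repeats the following loop: (1) perform the left update; if $b_L-a_L>\eta$, call $\textsc{Tester}(a_L,b_L,\delta_{\min})$ and if it returns Yes, return Yes. (2) Perform the right update; if $b_R-a_R>\eta$, call $\textsc{Tester}(a_R,b_R,\delta_{\min})$ and if it returns No, return No. (3) If $b_R-a_R\le\eta$ and $b_L-a_L\le\eta$, return the output of $\textsc{Tester}(\theta,\theta+\eta,\delta_{\min})$. *)

theory Defs
  imports "HOL-Probability.Probability"
begin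

text \<open>Outputs of Tester / BinCert: Yes, No, None (the latter called Undecided here
  to avoid a clash with the option constructor).\<close>
datatype answer = Yes | No | Undecided

text \<open>A tester is modelled as a function from the arguments (a, b, delta') to a
  probability distribution over outputs; each call samples freshly (monadic bind).\<close>
type_synonym tester = "real \<Rightarrow> real \<Rightarrow> real \<Rightarrow> answer pmf"

definition tester_guarantee :: "real \<Rightarrow> tester \<Rightarrow> bool" where
  "tester_guarantee p T \<longleftrightarrow>
     (\<forall>a b d. 0 \<le> a \<and> a < b \<and> b \<le> 1 \<and> 0 < d \<and> d \<le> 1 \<longrightarrow>
        (p \<le> a \<longrightarrow> pmf (T a b d) Yes \<ge> 1 - d) \<and>
        (p > b \<longrightarrow> pmf (T a b d) No \<ge> 1 - d))"

definition left_update :: "real \<Rightarrow> real \<Rightarrow> (real \<times> real) option \<Rightarrow> real \<times> real" where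
  "left_update \<theta> \<eta> L =
     (if \<theta> = 0 then (0, \<eta>)
      else (case L of None \<Rightarrow> (0, \<theta>)
            | Some (a, b) \<Rightarrow> (b - max \<eta> ((b - a) / 2), b)))"

definition right_update :: "real \<Rightarrow> real \<Rightarrow> (real \<times> real) option \<Rightarrow> real \<times> real" where
  "right_update \<theta> \<eta> R =
     (case R of None \<Rightarrow> (\<theta> + \<eta>, 1)
      | Some (a, b) \<Rightarrow> (a, a + max \<eta> ((b - a) / 2)))"

text \<open>One iteration of the main loop, with the current left/right intervals
  (None = undefined). dm is delta_min.\<close>
partial_function (spmf) bincert_loop ::
  "real \<Rightarrow> real \<Rightarrow> real \<Rightarrow> tester \<Rightarrow> (real \<times> real) option \<Rightarrow> (real \<times> real) option \<Rightarrow> answer spmf"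
where
  "bincert_loop \<theta> \<eta> dm T L R =
    (if snd (left_update \<theta> \<eta> L) - fst (left_update \<theta> \<eta> L) > \<eta>
     then bind_spmf (spmf_of_pmf (T (fst (left_update \<theta> \<eta> L)) (snd (left_update \<theta> \<eta> L)) dm))
            (\<lambda>x. if x = Yes then return_spmf Yes else (if snd (right_update \<theta> \<eta> R) - fst (right_update \<theta> \<eta> R) > \<eta>
              then bind_spmf (spmf_of_pmf (T (fst (right_update \<theta> \<eta> R)) (snd (right_update \<theta> \<eta> R)) dm))
                     (\<lambda>y. if y = No then return_spmf No else (if snd (right_update \<theta> \<eta> R) - fst (right_update \<theta> \<eta> R) \<le> \<eta>
                   \<and> snd (left_update \<theta> \<eta> L) - fst (left_update \<theta> \<eta> L) \<le> \<eta>
                then spmf_of_pmf (T \<theta> (\<theta> + \<eta>) dm)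
                else bincert_loop \<theta> \<eta> dm T (Some (left_update \<theta> \<eta> L)) (Some (right_update \<theta> \<eta> R))))
              else (if snd (right_update \<theta> \<eta> R) - fst (right_update \<theta> \<eta> R) \<le> \<eta>
                   \<and> snd (left_update \<theta> \<eta> L) - fst (left_update \<theta> \<eta> L) \<le> \<eta>
                then spmf_of_pmf (T \<theta> (\<theta> + \<eta>) dm)
                else bincert_loop \<theta> \<eta> dm T (Some (left_update \<theta> \<eta> L)) (Some (right_update \<theta> \<eta> R)))))
     else (if snd (right_update \<theta> \<eta> R) - fst (right_update \<theta> \<eta> R) > \<eta>
              then bind_spmf (spmf_of_pmf (T (fst (right_update \<theta> \<eta> R)) (snd (right_update \<theta> \<eta> R)) dm))
                     (\<lambda>y. if y = No then return_spmf No else (if snd (right_update \<theta> \<eta> R) - fst (right_update \<theta> \<eta> R) \<le> \<eta>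
                   \<and> snd (left_update \<theta> \<eta> L) - fst (left_update \<theta> \<eta> L) \<le> \<eta>
                then spmf_of_pmf (T \<theta> (\<theta> + \<eta>) dm)
                else bincert_loop \<theta> \<eta> dm T (Some (left_update \<theta> \<eta> L)) (Some (right_update \<theta> \<eta> R))))
              else (if snd (right_update \<theta> \<eta> R) - fst (right_update \<theta> \<eta> R) \<le> \<eta>
                   \<and> snd (left_update \<theta> \<eta> L) - fst (left_update \<theta> \<eta> L) \<le> \<eta>
                then spmf_of_pmf (T \<theta> (\<theta> + \<eta>) dm)
                else bincert_loop \<theta> \<eta> dm T (Some (left_update \<theta> \<eta> L)) (Some (right_update \<theta> \<eta> R)))))"

definition bincert_n :: "real \<Rightarrow> real \<Rightarrow> real" where
  "bincert_n \<theta> \<eta> =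
     3 + (if \<theta> = 0 then 0 else max 0 (log 2 (\<theta> / \<eta>)))
       + max 0 (log 2 ((1 - \<theta> - \<eta>) / \<eta>))"

definition bincert :: "real \<Rightarrow> real \<Rightarrow> real \<Rightarrow> tester \<Rightarrow> answer spmf" where
  "bincert \<theta> \<eta> \<delta> T = bincert_loop \<theta> \<eta> (\<delta> / bincert_n \<theta> \<eta>) T None None"

end

theory Submission
  imports Defs
begin

definition wL :: "real \<Rightarrow> real \<Rightarrow> (real \<times> real) option \<Rightarrow> real" where
  "wL \<theta> \<eta> L = snd (left_update \<theta> \<eta> L) - fst (left_update \<theta> \<eta> L)"
definition wR :: "real \<Rightarrow> real \<Rightarrow> (real \<times> real) option \<Rightarrow> real" where
  "wR \<theta> \<eta> R = snd (right_update \<theta> \<eta> R) - fst (right_update \<theta> \<eta> R)"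
definition Bf :: "real \<Rightarrow> real \<Rightarrow> real" where
  "Bf \<eta> \<rho> = (if \<rho> \<le> \<eta> then 1 else 2 + log 2 (\<rho> / \<eta>))"

lemma loop_eq: "bincert_loop \<theta> \<eta> dm T L R =
  (let lu = left_update \<theta> \<eta> L; ru = right_update \<theta> \<eta> R;
       FIN = (if wR \<theta> \<eta> R \<le> \<eta> \<and> wL \<theta> \<eta> L \<le> \<eta> then spmf_of_pmf (T \<theta> (\<theta>+\<eta>) dm)
              else bincert_loop \<theta> \<eta> dm T (Some lu) (Some ru));
       REST = (if wR \<theta> \<eta> R > \<eta> then bind_spmf (spmf_of_pmf (T (fst ru) (snd ru) dm))
                 (\<lambda>y. if y = No then return_spmf No else FIN) else FIN)
   in if wL \<theta> \<eta> L > \<eta> then bind_spmf (spmf_of_pmf (T (fst lu) (snd lu) dm))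
         (\<lambda>x. if x = Yes then return_spmf Yes else REST) else REST)"
  by (subst bincert_loop.simps) (simp add: Let_def wL_def wR_def)

lemma set3: "set_pmf q \<subseteq> {Yes, No, Undecided}"
  using answer.exhaust by blast

lemma spmf_bind3: "spmf (bind_spmf (spmf_of_pmf q) f) x =
  pmf q Yes * spmf (f Yes) x + pmf q No * spmf (f No) x + pmf q Undecided * spmf (f Undecided) x"
proof -
  have "spmf (bind_spmf (spmf_of_pmf q) f) x = (\<integral>y. spmf (f y) x \<partial>measure_pmf q)"
    unfolding spmf_bind by simp
  also have "\<dots> = (\<Sum>a\<in>{Yes, No, Undecided}. spmf (f a) x * pmf q a)"
    by (rule integral_measure_pmf_real) (use set3 in auto)
  finally show ?thesis by (simp add: algebra_simps)
qed

lemma pmf3: "pmf q Yes + pmf q No + pmf q Undecided = 1"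
  using sum_pmf_eq_1[OF _ set3, of q] by simp

lemma wL_next: "0 < \<eta> \<Longrightarrow> wL \<theta> \<eta> (Some (left_update \<theta> \<eta> L)) = max \<eta> (wL \<theta> \<eta> L / 2)"
  by (cases "left_update \<theta> \<eta> L") (auto simp: wL_def left_update_def)

lemma wR_next: "wR \<theta> \<eta> (Some (right_update \<theta> \<eta> R)) = max \<eta> (wR \<theta> \<eta> R / 2)"
  by (cases "right_update \<theta> \<eta> R") (auto simp: wR_def right_update_def)

lemma Bf_ge1: "0 < \<eta> \<Longrightarrow> Bf \<eta> \<rho> \<ge> 1"
proof -
  assume "0 < \<eta>"
  show ?thesis
  proof (cases "\<rho> \<le> \<eta>")
    case False
    then have "\<rho> / \<eta> > 1" using \<open>0 < \<eta>\<close> by simp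
    then have "log 2 (\<rho>/\<eta>) > 0" by simp
    then show ?thesis using False by (simp add: Bf_def)
  qed (simp add: Bf_def)
qed

lemma Bf_step: assumes "0 < \<eta>" "\<rho> > \<eta>" shows "Bf \<eta> (max \<eta> (\<rho>/2)) \<le> Bf \<eta> \<rho> - 1"
proof (cases "\<rho>/2 \<le> \<eta>")
  case True
  have "\<rho> / \<eta> > 1" using assms by simp
  then have "log 2 (\<rho>/\<eta>) > 0" by simp
  then show ?thesis using True assms by (simp add: Bf_def)
next
  case False
  have "log 2 (\<rho>/2/\<eta>) = log 2 (\<rho>/\<eta>) - 1"
  proof -
    have "\<rho>/2/\<eta> = (\<rho>/\<eta>)/2" by simp
    also have "log 2 \<dots> = log 2 (\<rho>/\<eta>) - log 2 2"
      using assms by (subst log_divide) auto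
    finally show ?thesis by simp
  qed
  then show ?thesis using False assms by (simp add: Bf_def)
qed

lemma Bf_small: "0 < \<eta> \<Longrightarrow> \<rho> \<le> \<eta> \<Longrightarrow> Bf \<eta> (max \<eta> (\<rho>/2)) = 1 \<and> Bf \<eta> \<rho> = 1"
  by (simp add: Bf_def)

definition invL :: "real \<Rightarrow> real \<Rightarrow> (real \<times> real) option \<Rightarrow> bool" where
  "invL \<theta> \<eta> L \<longleftrightarrow> \<theta> = 0 \<or> (snd (left_update \<theta> \<eta> L) = \<theta> \<and> wL \<theta> \<eta> L \<le> max \<eta> \<theta>)"
definition invR :: "real \<Rightarrow> real \<Rightarrow> (real \<times> real) option \<Rightarrow> bool" where
  "invR \<theta> \<eta> R \<longleftrightarrow> fst (right_update \<theta> \<eta> R) = \<theta> + \<eta> \<and> wR \<theta> \<eta> R \<le> max \<eta> (1 - \<theta> - \<eta>)"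

lemma invL_next: assumes "0 < \<eta>" "invL \<theta> \<eta> L" shows "invL \<theta> \<eta> (Some (left_update \<theta> \<eta> L))"
proof (cases "\<theta> = 0")
  case False
  then have a: "snd (left_update \<theta> \<eta> L) = \<theta>" "wL \<theta> \<eta> L \<le> max \<eta> \<theta>" using assms by (auto simp: invL_def)
  have "snd (left_update \<theta> \<eta> (Some (left_update \<theta> \<eta> L))) = \<theta>"
    using a False by (cases "left_update \<theta> \<eta> L") (auto simp: left_update_def)
  moreover have "wL \<theta> \<eta> (Some (left_update \<theta> \<eta> L)) \<le> max \<eta> \<theta>"
    using a assms by (simp add: wL_next)
  ultimately show ?thesis by (simp add: invL_def)
qed (simp add: invL_def)

lemma invR_next: assumes "0 < \<eta>" "invR \<theta> \<eta> R" shows "invR \<theta> \<eta> (Some (right_update \<theta> \<eta> R))"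
proof -
  have a: "fst (right_update \<theta> \<eta> R) = \<theta> + \<eta>" "wR \<theta> \<eta> R \<le> max \<eta> (1 - \<theta> - \<eta>)" using assms by (auto simp: invR_def)
  have "fst (right_update \<theta> \<eta> (Some (right_update \<theta> \<eta> R))) = \<theta> + \<eta>"
    using a by (cases "right_update \<theta> \<eta> R") (auto simp: right_update_def)
  moreover have "wR \<theta> \<eta> (Some (right_update \<theta> \<eta> R)) \<le> max \<eta> (1 - \<theta> - \<eta>)"
    using a assms by (auto simp add: wR_next max_def)
  ultimately show ?thesis by (simp add: invR_def)
qed

lemma main:
  assumes eta: "0 < \<eta>" and th: "0 \<le> \<theta>" "\<theta> + \<eta> \<le> 1" and dm: "0 < dm" "dm \<le> 1"
    and tg: "tester_guarantee p T"
  shows "invL \<theta> \<eta> L \<Longrightarrow> invR \<theta> \<eta> R \<Longrightarrow> wL \<theta> \<eta> L \<le> \<eta> * 2^k \<Longrightarrow> wR \<theta> \<eta> R \<le> \<eta> * 2^k \<Longrightarrow>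
    lossless_spmf (bincert_loop \<theta> \<eta> dm T L R)
    \<and> (p \<le> \<theta> \<longrightarrow> spmf (bincert_loop \<theta> \<eta> dm T L R) Yes \<ge> 1 - dm * Bf \<eta> (wR \<theta> \<eta> R))
    \<and> (p > \<theta> + \<eta> \<longrightarrow> spmf (bincert_loop \<theta> \<eta> dm T L R) No \<ge> 1 - dm * Bf \<eta> (wL \<theta> \<eta> L))"
proof (induction k arbitrary: L R rule: less_induct)
  case (less k L R)
  have tY: "pmf (T a b dm) Yes \<ge> 1 - dm" if "0 \<le> a" "a < b" "b \<le> 1" "p \<le> a" for a b
    using tg that dm unfolding tester_guarantee_def by blast
  have tN: "pmf (T a b dm) No \<ge> 1 - dm" if "0 \<le> a" "a < b" "b \<le> 1" "p > b" for a b
    using tg that dm unfolding tester_guarantee_def by blast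
  define lu where "lu = left_update \<theta> \<eta> L"
  define ru where "ru = right_update \<theta> \<eta> R"
  define wl where "wl = wL \<theta> \<eta> L"
  define wr where "wr = wR \<theta> \<eta> R"
  define FIN where "FIN = (if wr \<le> \<eta> \<and> wl \<le> \<eta> then spmf_of_pmf (T \<theta> (\<theta>+\<eta>) dm)
              else bincert_loop \<theta> \<eta> dm T (Some lu) (Some ru))"
  define REST where "REST = (if wr > \<eta> then bind_spmf (spmf_of_pmf (T (fst ru) (snd ru) dm))
                 (\<lambda>y. if y = No then return_spmf No else FIN) else FIN)"
  have eq: "bincert_loop \<theta> \<eta> dm T L R = (if wl > \<eta> then bind_spmf (spmf_of_pmf (T (fst lu) (snd lu) dm))
         (\<lambda>x. if x = Yes then return_spmf Yes else REST) else REST)"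
    unfolding loop_eq[of \<theta> \<eta> dm T L R] REST_def FIN_def lu_def ru_def wl_def wr_def by (simp add: Let_def)
  have fru: "fst ru = \<theta> + \<eta>" and wrb: "wr \<le> max \<eta> (1 - \<theta> - \<eta>)"
    using less.prems(2) by (auto simp: invR_def ru_def wr_def)
  have sru: "snd ru = \<theta> + \<eta> + wr" using fru by (simp add: wr_def wR_def ru_def)
  have lcase: "\<theta> \<noteq> 0 \<and> snd lu = \<theta> \<and> fst lu = \<theta> - wl \<and> wl \<le> \<theta>" if "wl > \<eta>"
  proof -
    have "\<theta> \<noteq> 0" using that eta by (auto simp: wl_def wL_def left_update_def)
    then have "snd lu = \<theta>" "wl \<le> max \<eta> \<theta>" using less.prems(1) by (auto simp: invL_def lu_def wl_def)
    then show ?thesis using that \<open>\<theta> \<noteq> 0\<close> by (auto simp: wl_def wL_def lu_def)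
  qed
  have FIN: "lossless_spmf FIN
    \<and> (p \<le> \<theta> \<longrightarrow> spmf FIN Yes \<ge> 1 - dm * (Bf \<eta> wr - (if wr > \<eta> then 1 else 0)))
    \<and> (p > \<theta> + \<eta> \<longrightarrow> spmf FIN No \<ge> 1 - dm * (Bf \<eta> wl - (if wl > \<eta> then 1 else 0)))"
  proof (cases "wr \<le> \<eta> \<and> wl \<le> \<eta>")
    case True
    then have F: "FIN = spmf_of_pmf (T \<theta> (\<theta>+\<eta>) dm)" by (simp add: FIN_def)
    have "Bf \<eta> wr = 1" "Bf \<eta> wl = 1" using True by (auto simp: Bf_def)
    then show ?thesis using True F tY[of \<theta> "\<theta>+\<eta>"] tN[of \<theta> "\<theta>+\<eta>"] th eta by auto
  next
    case False
    then have F: "FIN = bincert_loop \<theta> \<eta> dm T (Some lu) (Some ru)" unfolding FIN_def by (rule if_not_P)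
    have "k \<noteq> 0"
    proof
      assume "k = 0" then show False using False less.prems(3,4) by (auto simp: wl_def wr_def)
    qed
    then have kk: "k - 1 < k" "k = Suc (k - 1)" by auto
    have w1: "wL \<theta> \<eta> (Some lu) = max \<eta> (wl/2)" "wR \<theta> \<eta> (Some ru) = max \<eta> (wr/2)"
      using eta by (simp_all add: lu_def ru_def wl_def wr_def wL_next wR_next)
    have pw: "\<eta> \<le> \<eta> * 2 ^ (k - 1)" using eta by simp
    have "wl \<le> \<eta> * 2 ^ Suc (k - 1)" "wr \<le> \<eta> * 2 ^ Suc (k - 1)"
      using less.prems(3,4) kk(2) by (simp_all add: wl_def wr_def)
    then have b: "wL \<theta> \<eta> (Some lu) \<le> \<eta> * 2^(k-1)" "wR \<theta> \<eta> (Some ru) \<le> \<eta> * 2^(k-1)"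
      unfolding w1 using pw by auto
    have IH: "lossless_spmf FIN
      \<and> (p \<le> \<theta> \<longrightarrow> spmf FIN Yes \<ge> 1 - dm * Bf \<eta> (max \<eta> (wr/2)))
      \<and> (p > \<theta> + \<eta> \<longrightarrow> spmf FIN No \<ge> 1 - dm * Bf \<eta> (max \<eta> (wl/2)))"
      using less.IH[OF kk(1), of "Some lu" "Some ru"] b w1 F invL_next[OF eta less.prems(1)]
        invR_next[OF eta less.prems(2)] by (simp add: lu_def ru_def)
    have "Bf \<eta> (max \<eta> (wr/2)) \<le> Bf \<eta> wr - (if wr > \<eta> then 1 else 0)"
      using Bf_step[OF eta, of wr] Bf_small[OF eta, of wr] by auto
    moreover have "Bf \<eta> (max \<eta> (wl/2)) \<le> Bf \<eta> wl - (if wl > \<eta> then 1 else 0)"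
      using Bf_step[OF eta, of wl] Bf_small[OF eta, of wl] by auto
    moreover note dm
    ultimately have "dm * Bf \<eta> (max \<eta> (wr/2)) \<le> dm * (Bf \<eta> wr - (if wr > \<eta> then 1 else 0))"
       "dm * Bf \<eta> (max \<eta> (wl/2)) \<le> dm * (Bf \<eta> wl - (if wl > \<eta> then 1 else 0))"
      by (simp_all add: mult_left_mono)
    then show ?thesis using IH by linarith
  qed
  have S1: "spmf FIN x \<le> 1" "0 \<le> spmf FIN x" for x by (simp_all add: pmf_le_1)
  have REST: "lossless_spmf REST
    \<and> (p \<le> \<theta> \<longrightarrow> spmf REST Yes \<ge> 1 - dm * Bf \<eta> wr)
    \<and> (p > \<theta> + \<eta> \<longrightarrow> spmf REST No \<ge> 1 - dm * (Bf \<eta> wl - (if wl > \<eta> then 1 else 0)))"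
  proof (cases "wr > \<eta>")
    case True
    define q where "q = T (fst ru) (snd ru) dm"
    have R: "REST = bind_spmf (spmf_of_pmf q) (\<lambda>y. if y = No then return_spmf No else FIN)"
      using True by (simp add: REST_def q_def)
    have vr: "0 \<le> fst ru" "fst ru < snd ru" "snd ru \<le> 1"
      using True fru sru wrb th eta by auto
    have ll: "lossless_spmf REST" using FIN R by auto
    have sp: "spmf REST x = pmf q Yes * spmf FIN x + pmf q No * (if x = No then 1 else 0)
       + pmf q Undecided * spmf FIN x" for x
      unfolding R spmf_bind3 by (cases x) auto
    have p3: "pmf q Yes + pmf q No + pmf q Undecided = 1" by (rule pmf3)
    have nn: "0 \<le> pmf q Yes" "0 \<le> pmf q No" "0 \<le> pmf q Undecided" by simp_all
    have eN: "1 - pmf q No = pmf q Yes + pmf q Undecided" and eY: "1 - pmf q Yes = pmf q No + pmf q Undecided"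
      using p3 by linarith+
    have y: "spmf REST Yes \<ge> 1 - dm * Bf \<eta> wr" if "p \<le> \<theta>"
    proof -
      have "pmf q Yes \<ge> 1 - dm" using tY[OF vr] that fru eta unfolding q_def by simp
      then have pn: "pmf q No \<le> dm" using p3 nn by linarith
      have s: "spmf FIN Yes \<ge> 1 - dm * (Bf \<eta> wr - 1)" using FIN that True by simp
      have "spmf REST Yes = (1 - pmf q No) * spmf FIN Yes" unfolding eN sp[of Yes] by (simp add: algebra_simps)
      also have "\<dots> = spmf FIN Yes - pmf q No * spmf FIN Yes" by (simp add: algebra_simps)
      finally have "spmf REST Yes \<ge> spmf FIN Yes - dm"
        using mult_left_le[OF S1(1)[of Yes] nn(2)] pn by linarith
      then show ?thesis using s by (simp add: algebra_simps)
    qed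
    have n: "spmf REST No \<ge> spmf FIN No"
    proof -
      have "spmf REST No = (1 - pmf q No) * spmf FIN No + pmf q No" unfolding eN sp[of No] by (simp add: algebra_simps)
      also have "\<dots> = spmf FIN No + pmf q No * (1 - spmf FIN No)" by (simp add: algebra_simps)
      finally show ?thesis using S1(1)[of No] nn(2) by simp
    qed
    show ?thesis using ll y n FIN by force
  next
    case False
    then show ?thesis using FIN by (simp add: REST_def)
  qed
  have S2: "spmf REST x \<le> 1" "0 \<le> spmf REST x" for x by (simp_all add: pmf_le_1)
  show ?case
  proof (cases "wl > \<eta>")
    case False
    then show ?thesis using REST eq Bf_small[OF eta, of wl] by (simp add: wl_def wr_def)
  next
    case True
    define q where "q = T (fst lu) (snd lu) dm"
    have E: "bincert_loop \<theta> \<eta> dm T L R = bind_spmf (spmf_of_pmf q) (\<lambda>x. if x = Yes then return_spmf Yes else REST)"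
      using True eq by (simp add: q_def)
    have vl: "0 \<le> fst lu" "fst lu < snd lu" "snd lu \<le> 1"
      using True lcase[OF True] th eta by auto
    have ll: "lossless_spmf (bincert_loop \<theta> \<eta> dm T L R)" using REST E by auto
    have sp: "spmf (bincert_loop \<theta> \<eta> dm T L R) x = pmf q Yes * (if x = Yes then 1 else 0) + pmf q No * spmf REST x
       + pmf q Undecided * spmf REST x" for x
      unfolding E spmf_bind3 by (cases x) auto
    have p3: "pmf q Yes + pmf q No + pmf q Undecided = 1" by (rule pmf3)
    have nn: "0 \<le> pmf q Yes" "0 \<le> pmf q No" "0 \<le> pmf q Undecided" by simp_all
    have eN: "1 - pmf q No = pmf q Yes + pmf q Undecided" and eY: "1 - pmf q Yes = pmf q No + pmf q Undecided"
      using p3 by linarith+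
    have n: "spmf (bincert_loop \<theta> \<eta> dm T L R) No \<ge> 1 - dm * Bf \<eta> wl" if "p > \<theta> + \<eta>"
    proof -
      have "p > snd lu" using lcase[OF True] that eta by simp
      then have "pmf q No \<ge> 1 - dm" using tN[OF vl] unfolding q_def by simp
      then have pn: "pmf q Yes \<le> dm" using p3 nn by linarith
      have s: "spmf REST No \<ge> 1 - dm * (Bf \<eta> wl - 1)" using REST that True by simp
      have "spmf (bincert_loop \<theta> \<eta> dm T L R) No = (1 - pmf q Yes) * spmf REST No" unfolding eY sp[of No] by (simp add: algebra_simps)
      also have "\<dots> = spmf REST No - pmf q Yes * spmf REST No" by (simp add: algebra_simps)
      finally have "spmf (bincert_loop \<theta> \<eta> dm T L R) No \<ge> spmf REST No - dm"
        using mult_left_le[OF S2(1)[of No] nn(1)] pn by linarith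
      then show ?thesis using s by (simp add: algebra_simps)
    qed
    have y: "spmf (bincert_loop \<theta> \<eta> dm T L R) Yes \<ge> spmf REST Yes"
    proof -
      have "spmf (bincert_loop \<theta> \<eta> dm T L R) Yes = (1 - pmf q Yes) * spmf REST Yes + pmf q Yes" unfolding eY sp[of Yes] by (simp add: algebra_simps)
      also have "\<dots> = spmf REST Yes + pmf q Yes * (1 - spmf REST Yes)" by (simp add: algebra_simps)
      finally show ?thesis using S2(1)[of Yes] nn(1) by simp
    qed
    show ?thesis using ll y n REST by (force simp: wl_def wr_def)
  qed
qed

theorem theorem1:
  fixes p \<theta> \<eta> \<delta> :: real and T :: tester
  assumes "0 \<le> p" "p \<le> 1"
    and "0 \<le> \<theta>" "\<theta> < 1" "0 < \<eta>" "\<eta> < 1" "\<theta> + \<eta> < 1"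
    and "0 < \<delta>" "\<delta> \<le> 1"
    and "tester_guarantee p T"
  shows "lossless_spmf (bincert \<theta> \<eta> \<delta> T)
    \<and> (p \<le> \<theta> \<longrightarrow> spmf (bincert \<theta> \<eta> \<delta> T) Yes \<ge> 1 - \<delta>)
    \<and> (p > \<theta> + \<eta> \<longrightarrow> spmf (bincert \<theta> \<eta> \<delta> T) No \<ge> 1 - \<delta>)"
proof -
  define n where "n = bincert_n \<theta> \<eta>"
  define dm where "dm = \<delta> / n"
  have n3: "n \<ge> 3" unfolding n_def bincert_n_def by auto
  have dm: "0 < dm" "dm \<le> 1" using n3 assms unfolding dm_def by (auto simp: field_simps)
  have wL0: "wL \<theta> \<eta> None = (if \<theta> = 0 then \<eta> else \<theta>)" by (simp add: wL_def left_update_def)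
  have wR0: "wR \<theta> \<eta> None = 1 - \<theta> - \<eta>" by (simp add: wR_def right_update_def)
  have iL: "invL \<theta> \<eta> None" using wL0 by (simp add: invL_def left_update_def)
  have iR: "invR \<theta> \<eta> None" using wR0 by (simp add: invR_def right_update_def)
  obtain k where k: "1 / \<eta> < 2 ^ k" using real_arch_pow[of 2 "1/\<eta>"] by auto
  then have k1: "1 < \<eta> * 2 ^ k" using assms by (simp add: field_simps)
  have bL: "wL \<theta> \<eta> None \<le> \<eta> * 2 ^ k" using k1 wL0 assms by auto
  have bR: "wR \<theta> \<eta> None \<le> \<eta> * 2 ^ k" using k1 wR0 assms by auto
  note M = main[OF assms(5) assms(3) _ dm assms(10) iL iR bL bR]
  have BR: "Bf \<eta> (wR \<theta> \<eta> None) \<le> n"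
    unfolding wR0 n_def bincert_n_def Bf_def by auto
  have BL: "Bf \<eta> (wL \<theta> \<eta> None) \<le> n"
    unfolding wL0 n_def bincert_n_def Bf_def by auto
  have "dm * n = \<delta>" using n3 unfolding dm_def by simp
  then have "dm * Bf \<eta> (wR \<theta> \<eta> None) \<le> \<delta>" "dm * Bf \<eta> (wL \<theta> \<eta> None) \<le> \<delta>"
    using BR BL dm by (metis mult_left_mono less_imp_le)+
  moreover have "bincert \<theta> \<eta> \<delta> T = bincert_loop \<theta> \<eta> dm T None None"
    unfolding bincert_def dm_def n_def ..
  ultimately show ?thesis using M assms by force
qed

end
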